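(* Let $t>0$, $0<\delta<1$, $k>-t\frac{\ln\left(\frac{2}{1+\delta}-1\right)}{\ln(1+\delta)}$, and $w\ge0$. Then for all sufficiently large $m$, $$\frac{\left(\frac12+\frac12\left(1-\frac{k\ln m}{m}\right)^w\right)^m}{m^{-tw}+(1+\delta)^{-m}}<1.$$
   Context: $\ln$ denotes the natural logarithm. *)

theory Defs
  imports "HOL-Analysis.Analysis"
begin

end

theory Submission
  imports Defs "HOL-Real_Asymp.Real_Asymp"
begin

lemma aux_lim: assumes "k>0" "w>0" shows "((\<lambda>m::real. m * ln (1/2 + 1/2 * (1 - k * ln m / m) powr w) / ln m) \<longlongrightarrow> -(w*k/2)) at_top"
  using assms by real_asymp

theorem lemma6:
  fixes t \<delta> k w :: real
  assumes "t > 0" and "0 < \<delta>" and "\<delta> < 1"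
    and "k > - t * ln (2 / (1 + \<delta>) - 1) / ln (1 + \<delta>)"
    and "w \<ge> 0"
  shows "\<forall>\<^sub>F m in sequentially.
    (1/2 + 1/2 * (1 - k * ln (real m) / real m) powr w) ^ m
      / (real m powr (- t * w) + (1 + \<delta>) powr (- real m)) < 1"
proof -
  have la: "ln (1+\<delta>) > 0" using assms by simp
  have e: "2 / (1 + \<delta>) - 1 = (1-\<delta>)/(1+\<delta>)" using assms by (simp add: field_simps)
  have c: "ln (2 / (1 + \<delta>) - 1) = ln (1-\<delta>) - ln (1+\<delta>)" unfolding e using assms by (simp add: ln_div)
  have s: "ln (1-\<delta>) + ln (1+\<delta>) < 0"
  proof -
    have "ln (1-\<delta>) + ln (1+\<delta>) = ln (1 - \<delta>^2)" proof -
      have "ln (1-\<delta>) + ln (1+\<delta>) = ln ((1-\<delta>)*(1+\<delta>))" using assms by (simp add: ln_mult)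
      also have "(1-\<delta>)*(1+\<delta>) = 1 - \<delta>^2" by (simp add: algebra_simps power2_eq_square)
      finally show ?thesis .
    qed
    also have "\<dots> < 0"
    proof -
      have "\<delta>^2 > 0" "\<delta>^2 < 1" using assms by (simp_all add: power_less_one_iff)
      thus ?thesis by simp
    qed
    finally show ?thesis .
  qed
  have "- t * ln (2 / (1 + \<delta>) - 1) / ln (1 + \<delta>) > 2 * t"
  proof -
    have "- ln (2 / (1 + \<delta>) - 1) > 2 * ln (1+\<delta>)" using c s by linarith
    hence "t * (- ln (2 / (1 + \<delta>) - 1)) > t * (2 * ln (1+\<delta>))" using assms(1) by (rule mult_strict_left_mono)
    thus ?thesis using la by (simp add: field_simps)
  qed
  hence k2: "k > 2*t" using assms(4) by linarith
  hence kpos: "k > 0" using assms(1) by linarith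
  show ?thesis
  proof (cases "w = 0")
    case True
    have ev: "\<forall>\<^sub>F m in sequentially. 1 - k * ln (real m) / real m \<noteq> 0"
    proof -
      have "((\<lambda>m::real. 1 - k * ln m / m) \<longlongrightarrow> 1) at_top" by real_asymp
      hence "((\<lambda>m. 1 - k * ln (real m) / real m) \<longlongrightarrow> 1) sequentially"
        by (rule filterlim_compose[OF _ filterlim_real_sequentially])
      thus ?thesis by (rule tendsto_imp_eventually_ne) simp
    qed
    show ?thesis using ev eventually_gt_at_top[of 0]
    proof eventually_elim
      case (elim m)
      have "(1 + \<delta>) powr (- real m) > 0" using assms by simp
      hence "1 / (1 + (1 + \<delta>) powr - real m) < 1" by (simp only: divide_less_eq_1) linarith
      thus ?case using elim True by simp
    qed
  next
    case False
    hence wpos: "w > 0" using assms(5) by linarith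
    have L: "((\<lambda>m. real m * ln (1/2 + 1/2 * (1 - k * ln (real m) / real m) powr w) / ln (real m)) \<longlongrightarrow> -(w*k/2)) sequentially"
      by (rule filterlim_compose[OF aux_lim[OF kpos wpos] filterlim_real_sequentially])
    have "-(w*k/2) < - t * w" using k2 wpos by (simp add: field_simps)
    hence ev: "\<forall>\<^sub>F m in sequentially. real m * ln (1/2 + 1/2 * (1 - k * ln (real m) / real m) powr w) / ln (real m) < - t * w"
      using L order_tendstoD(2) by blast
    show ?thesis using ev eventually_gt_at_top[of 2]
    proof eventually_elim
      case (elim m)
      define b where "b = 1/2 + 1/2 * (1 - k * ln (real m) / real m) powr w"
      have bpos: "b > 0" unfolding b_def by (simp add: add_pos_nonneg)
      have lnm: "ln (real m) > 0" using elim by simp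
      have "real m * ln b / ln (real m) < - t * w" using elim unfolding b_def by simp
      hence lt: "real m * ln b < - t * w * ln (real m)" using lnm by (simp add: field_simps)
      have "b ^ m = exp (real m * ln b)" using bpos by (simp add: exp_of_nat_mult)
      also have "\<dots> < exp (- t * w * ln (real m))" using lt by simp
      also have "\<dots> = real m powr (- t * w)" using elim by (simp add: powr_def mult.commute)
      finally have n: "b ^ m < real m powr (- t * w)" .
      have "(1 + \<delta>) powr (- real m) > 0" using assms by simp
      hence "b ^ m < real m powr (- t * w) + (1 + \<delta>) powr (- real m)" using n by linarith
      moreover have "b ^ m \<ge> 0" using bpos by simp
      ultimately show ?case unfolding b_def[symmetric] by simp
    qed
  qed
qed

end
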